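(* Let $Q\subset\mathrm{EX}(M)$. The map $\iota_Q:M\to Q(M)$, $\iota_Q(x)=q(\alpha(x))$ where $\alpha\in\mathcal{A}(M)$ is any chart with $x\in\mathrm{dom}(\alpha)$ and $\alpha(x)$ is regarded as a point of $N_{(\alpha,\mathrm{ran}(\alpha))}$, is well defined (independent of $\alpha$), injective, continuous, and a homeomorphism onto its image; moreover $\iota_Q(M)$ is an open dense subset of $Q(M)$.
   Context: Conventions: $M$ is an $n$-dimensional smooth manifold (Hausdorff, second countable) with maximal $C^\infty$ atlas $\mathcal{A}(M)$; every chart $\alpha$ has open domain $\mathrm{dom}(\alpha)\subset M$ and open range $\mathrm{ran}(\alpha)\subset\mathbb{R}^n$. For $A\subset\mathbb{R}^n$, $\partial A$ is its boundary in $\mathbb{R}^n$; for $A\subset U\subset\mathbb{R}^n$, $\partial_U A$ is the boundary of $A$ relative to $U$. An admissible boundary point of $\alpha$ is a $p\in\partial\,\mathrm{ran}(\alpha)$ such that every sequence $(x_i)\subset\mathrm{dom}(\alpha)$ with $\alpha(x_i)\to p$ has no accumulation point in $M$; $B(\alpha)$ is the set of these. An extension is a pair $(\alpha,U)$, $U\subset\mathbb{R}^n$ open, $\mathrm{ran}(\alpha)\subset U$, $\emptyset\ne\partial_U\mathrm{ran}(\alpha)\subset B(\alpha)$; $\mathrm{EX}(M)$ is the set of extensions. A boundary set is $(\alpha,U,V)$ with $(\alpha,U)\in\mathrm{EX}(M)$, $V\subset B(\alpha)\cap U$ (a boundary point if $V=\{p\}$). $(\alpha,U,V)$ covers $(\beta,X,Y)$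 if for every sequence $(y_i)\subset\mathrm{dom}(\beta)$ with $(\beta(y_i))$ having an accumulation point in $Y$ there is a subsequence $(v_i)\subset\mathrm{dom}(\alpha)$ of $(y_i)$ with $(\alpha(v_i))$ having an accumulation point in $V$; they are equivalent, $\equiv$, if each covers the other. Completion: for $Q\subset\mathrm{EX}(M)$ let $P=\{(\alpha,\mathrm{ran}(\alpha)):\alpha\in\mathcal{A}(M)\}$, $S_Q=P\cup Q$, $N_{(\alpha,U)}=\mathrm{ran}(\alpha)\cup\partial_U\mathrm{ran}(\alpha)$ with subspace topology of $\mathbb{R}^n$, $N_Q=\bigsqcup_{(\alpha,U)\in S_Q}N_{(\alpha,U)}$ with disjoint-union topology. Identify $x\in N_{(\alpha,U)}$ with $y\in N_{(\beta,X)}$ iff either $x\in\mathrm{ran}(\alpha)$, $y\in\mathrm{ran}(\beta)$, $\beta\circ\alpha^{-1}(x)=y$, or $x\in\partial_U\mathrm{ran}(\alpha)$, $y\in\partial_X\mathrm{ran}(\beta)$, $(\alpha,U,\{x\})\equiv(\beta,X,\{y\})$. $Q(M)$ is the quotient space with the quotient topology and $q:N_Q\to Q(M)$ the quotient map. *)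

theory Defs
  imports "HOL-Analysis.Analysis"
begin

text \<open>A chart on M is a pair (domain, map) with values in a Euclidean space 'e
  (so n = DIM('e)).\<close>

type_synonym ('a, 'e) chart = "'a set \<times> ('a \<Rightarrow> 'e)"

definition cdom :: "('a, 'e) chart \<Rightarrow> 'a set" where "cdom \<alpha> = fst \<alpha>"
definition cmap :: "('a, 'e) chart \<Rightarrow> 'a \<Rightarrow> 'e" where "cmap \<alpha> = snd \<alpha>"
definition cran :: "('a, 'e) chart \<Rightarrow> 'e set" where "cran \<alpha> = cmap \<alpha> ` cdom \<alpha>"

definition is_chart :: "'a topology \<Rightarrow> ('a, 'e::euclidean_space) chart \<Rightarrow> bool" where
  "is_chart M \<alpha> \<longleftrightarrow> openin M (cdom \<alpha>) \<and> open (cran \<alpha>) \<and>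
     homeomorphic_map (subtopology M (cdom \<alpha>)) (top_of_set (cran \<alpha>)) (cmap \<alpha>)"

inductive_set partials :: "'e::euclidean_space set \<Rightarrow> ('e \<Rightarrow> 'f::real_normed_vector) \<Rightarrow> ('e \<Rightarrow> 'f) set"
  for S f where
  base: "f \<in> partials S f"
| step: "g \<in> partials S f \<Longrightarrow> i \<in> Basis \<Longrightarrow>
         (\<forall>x\<in>S. ((\<lambda>t. g (x + t *\<^sub>R i)) has_vector_derivative g' x) (at 0)) \<Longrightarrow> g' \<in> partials S f"

definition Cinf_on :: "'e::euclidean_space set \<Rightarrow> ('e \<Rightarrow> 'f::real_normed_vector) \<Rightarrow> bool" where
  "Cinf_on S f \<longleftrightarrow> (\<forall>g\<in>partials S f. continuous_on S g \<and>
      (\<forall>i\<in>Basis. \<exists>g'. \<forall>x\<in>S. ((\<lambda>t. g (x + t *\<^sub>R i)) has_vector_derivative g' x) (at 0)))"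

definition transition :: "('a, 'e) chart \<Rightarrow> ('a, 'e) chart \<Rightarrow> 'e \<Rightarrow> 'e" where
  "transition \<alpha> \<beta> = cmap \<beta> \<circ> inv_into (cdom \<alpha>) (cmap \<alpha>)"

definition smooth_compat :: "('a, 'e::euclidean_space) chart \<Rightarrow> ('a, 'e) chart \<Rightarrow> bool" where
  "smooth_compat \<alpha> \<beta> \<longleftrightarrow>
     Cinf_on (cmap \<alpha> ` (cdom \<alpha> \<inter> cdom \<beta>)) (transition \<alpha> \<beta>) \<and>
     Cinf_on (cmap \<beta> ` (cdom \<alpha> \<inter> cdom \<beta>)) (transition \<beta> \<alpha>)"

definition maximal_smooth_atlas :: "'a topology \<Rightarrow> ('a, 'e::euclidean_space) chart set \<Rightarrow> bool" where
  "maximal_smooth_atlas M A \<longleftrightarrow>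
     (\<forall>\<alpha>\<in>A. is_chart M \<alpha>) \<and> (\<Union>\<alpha>\<in>A. cdom \<alpha>) = topspace M \<and>
     (\<forall>\<alpha>\<in>A. \<forall>\<beta>\<in>A. smooth_compat \<alpha> \<beta>) \<and>
     (\<forall>\<beta>. is_chart M \<beta> \<and> (\<forall>\<alpha>\<in>A. smooth_compat \<alpha> \<beta>) \<longrightarrow> \<beta> \<in> A)"

definition smooth_manifold :: "'a topology \<Rightarrow> ('a, 'e::euclidean_space) chart set \<Rightarrow> bool" where
  "smooth_manifold M A \<longleftrightarrow> Hausdorff_space M \<and> second_countable M \<and> maximal_smooth_atlas M A"

text \<open>y is an accumulation point of the sequence s in X: every neighbourhood of y
  contains s i for infinitely many i (equivalently, y is a subsequential limit).\<close>
definition seq_accpt :: "'b topology \<Rightarrow> (nat \<Rightarrow> 'b) \<Rightarrow> 'b \<Rightarrow> bool" where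
  "seq_accpt X s y \<longleftrightarrow> y \<in> topspace X \<and> (\<forall>U. openin X U \<and> y \<in> U \<longrightarrow> infinite {i. s i \<in> U})"

definition adm_boundary :: "'a topology \<Rightarrow> ('a, 'e::euclidean_space) chart \<Rightarrow> 'e set" where
  "adm_boundary M \<alpha> = {p \<in> frontier (cran \<alpha>).
      \<forall>s. (\<forall>i. s i \<in> cdom \<alpha>) \<and> (cmap \<alpha> \<circ> s) \<longlonglongrightarrow> p \<longrightarrow> \<not> (\<exists>y. seq_accpt M s y)}"

definition rel_boundary :: "'e::euclidean_space set \<Rightarrow> 'e set \<Rightarrow> 'e set" where
  "rel_boundary U S = (top_of_set U) frontier_of S"

definition EXT :: "'a topology \<Rightarrow> ('a, 'e::euclidean_space) chart set \<Rightarrow> (('a, 'e) chart \<times> 'e set) set" where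
  "EXT M A = {(\<alpha>, U). \<alpha> \<in> A \<and> open U \<and> cran \<alpha> \<subseteq> U \<and>
       rel_boundary U (cran \<alpha>) \<noteq> {} \<and> rel_boundary U (cran \<alpha>) \<subseteq> adm_boundary M \<alpha>}"

text \<open>(alpha,U,V) covers (beta,X,Y); the sets U, X play no role in the condition.\<close>
definition covers :: "('a, 'e::euclidean_space) chart \<Rightarrow> 'e set \<Rightarrow> ('a, 'e) chart \<Rightarrow> 'e set \<Rightarrow> bool" where
  "covers \<alpha> V \<beta> Y \<longleftrightarrow>
     (\<forall>s. (\<forall>i. s i \<in> cdom \<beta>) \<and> (\<exists>y\<in>Y. seq_accpt euclidean (cmap \<beta> \<circ> s) y) \<longrightarrow>
        (\<exists>r. strict_mono r \<and> (\<forall>i. s (r i) \<in> cdom \<alpha>) \<and>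
             (\<exists>v\<in>V. seq_accpt euclidean (cmap \<alpha> \<circ> (s \<circ> r)) v)))"

definition bequiv :: "('a, 'e::euclidean_space) chart \<Rightarrow> 'e set \<Rightarrow> ('a, 'e) chart \<Rightarrow> 'e set \<Rightarrow> bool" where
  "bequiv \<alpha> V \<beta> Y \<longleftrightarrow> covers \<alpha> V \<beta> Y \<and> covers \<beta> Y \<alpha> V"

definition SQ :: "('a, 'e::euclidean_space) chart set \<Rightarrow> (('a, 'e) chart \<times> 'e set) set
                  \<Rightarrow> (('a, 'e) chart \<times> 'e set) set" where
  "SQ A Q = {(\<alpha>, cran \<alpha>) | \<alpha>. \<alpha> \<in> A} \<union> Q"

definition Npiece :: "('a, 'e::euclidean_space) chart \<times> 'e set \<Rightarrow> 'e set" where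
  "Npiece e = cran (fst e) \<union> rel_boundary (snd e) (cran (fst e))"

definition NQ :: "('a, 'e::euclidean_space) chart set \<Rightarrow> (('a, 'e) chart \<times> 'e set) set
                  \<Rightarrow> ((('a, 'e) chart \<times> 'e set) \<times> 'e) topology" where
  "NQ A Q = sum_topology (\<lambda>e. top_of_set (Npiece e)) (SQ A Q)"

definition ident :: "(('a, 'e::euclidean_space) chart \<times> 'e set) \<times> 'e \<Rightarrow> (('a, 'e) chart \<times> 'e set) \<times> 'e \<Rightarrow> bool" where
  "ident p p' \<longleftrightarrow>
     (let \<alpha> = fst (fst p); U = snd (fst p); x = snd p;
          \<beta> = fst (fst p'); X = snd (fst p'); y = snd p' in
       (x \<in> cran \<alpha> \<and> y \<in> cran \<beta> \<and> (\<exists>z\<in>cdom \<alpha> \<inter> cdom \<beta>. cmap \<alpha> z = x \<and> cmap \<beta> z = y)) \<or>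
       (x \<in> rel_boundary U (cran \<alpha>) \<and> y \<in> rel_boundary X (cran \<beta>) \<and> bequiv \<alpha> {x} \<beta> {y}))"

definition qrel :: "('a, 'e::euclidean_space) chart set \<Rightarrow> (('a, 'e) chart \<times> 'e set) set
                   \<Rightarrow> (('a, 'e) chart \<times> 'e set) \<times> 'e \<Rightarrow> (('a, 'e) chart \<times> 'e set) \<times> 'e \<Rightarrow> bool" where
  "qrel A Q = equivclp (\<lambda>p p'. p \<in> topspace (NQ A Q) \<and> p' \<in> topspace (NQ A Q) \<and> ident p p')"

definition qmap :: "('a, 'e::euclidean_space) chart set \<Rightarrow> (('a, 'e) chart \<times> 'e set) set
                   \<Rightarrow> (('a, 'e) chart \<times> 'e set) \<times> 'e \<Rightarrow> ((('a, 'e) chart \<times> 'e set) \<times> 'e) set" where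
  "qmap A Q p = {p'. qrel A Q p p'}"

definition QM :: "('a, 'e::euclidean_space) chart set \<Rightarrow> (('a, 'e) chart \<times> 'e set) set
                  \<Rightarrow> ((('a, 'e) chart \<times> 'e set) \<times> 'e) set topology" where
  "QM A Q = topology (\<lambda>T. T \<subseteq> qmap A Q ` topspace (NQ A Q) \<and>
                          openin (NQ A Q) {p \<in> topspace (NQ A Q). qmap A Q p \<in> T})"

definition iota :: "('a, 'e::euclidean_space) chart set \<Rightarrow> (('a, 'e) chart \<times> 'e set) set
                   \<Rightarrow> 'a \<Rightarrow> ((('a, 'e) chart \<times> 'e set) \<times> 'e) set" where
  "iota A Q x = (let \<alpha> = (SOME \<alpha>. \<alpha> \<in> A \<and> x \<in> cdom \<alpha>) in qmap A Q ((\<alpha>, cran \<alpha>), cmap \<alpha> x))"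

end

theory Submission imports Defs begin

lemma istop_preimage: "istopology (\<lambda>T. T \<subseteq> f ` topspace X \<and> openin X {p \<in> topspace X. f p \<in> T})"
  unfolding istopology_def
proof (intro conjI allI impI)
  fix S T
  assume S: "S \<subseteq> f ` topspace X \<and> openin X {p \<in> topspace X. f p \<in> S}"
     and T: "T \<subseteq> f ` topspace X \<and> openin X {p \<in> topspace X. f p \<in> T}"
  have e: "{p \<in> topspace X. f p \<in> S \<inter> T} = {p \<in> topspace X. f p \<in> S} \<inter> {p \<in> topspace X. f p \<in> T}" by auto
  show "S \<inter> T \<subseteq> f ` topspace X" using S by auto
  show "openin X {p \<in> topspace X. f p \<in> S \<inter> T}" unfolding e using S T by (intro openin_Int) auto
next
  fix K assume K: "\<forall>S\<in>K. S \<subseteq> f ` topspace X \<and> openin X {p \<in> topspace X. f p \<in> S}"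
  have e: "{p \<in> topspace X. f p \<in> \<Union>K} = (\<Union>S\<in>K. {p \<in> topspace X. f p \<in> S})" by auto
  show "\<Union>K \<subseteq> f ` topspace X" using K by auto
  show "openin X {p \<in> topspace X. f p \<in> \<Union>K}" unfolding e using K by (intro openin_Union) auto
qed

lemma openin_QM:
  "openin (QM A Q) T \<longleftrightarrow> T \<subseteq> qmap A Q ` topspace (NQ A Q) \<and>
      openin (NQ A Q) {p \<in> topspace (NQ A Q). qmap A Q p \<in> T}"
proof -
  note istop_preimage[of "qmap A Q" "NQ A Q"]
  then show ?thesis unfolding QM_def by simp
qed

lemma topspace_QM: "topspace (QM A Q) = qmap A Q ` topspace (NQ A Q)"
proof -
  have "openin (QM A Q) (qmap A Q ` topspace (NQ A Q))"
  proof -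
    have "{p \<in> topspace (NQ A Q). qmap A Q p \<in> qmap A Q ` topspace (NQ A Q)} = topspace (NQ A Q)" by auto
    then show ?thesis unfolding openin_QM by simp
  qed
  then show ?thesis using openin_subset[of "QM A Q"] openin_QM[of A Q "topspace (QM A Q)"] by auto
qed

lemma topspace_NQ: "topspace (NQ A Q) = Sigma (SQ A Q) Npiece"
  unfolding NQ_def by (simp add: o_def)

lemma qmap_eq_iff: "qmap A Q p = qmap A Q p' \<longleftrightarrow> qrel A Q p p'"
proof
  assume "qmap A Q p = qmap A Q p'"
  moreover have "p' \<in> qmap A Q p'" unfolding qmap_def qrel_def by simp
  ultimately show "qrel A Q p p'" unfolding qmap_def by auto
next
  assume h: "qrel A Q p p'"
  have "qrel A Q p x \<longleftrightarrow> qrel A Q p' x" for x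
  proof
    assume "qrel A Q p x" then show "qrel A Q p' x" using h unfolding qrel_def
      by (meson equivclp_sym equivclp_trans)
  next
    assume "qrel A Q p' x" then show "qrel A Q p x" using h unfolding qrel_def
      by (meson equivclp_trans)
  qed
  then show "qmap A Q p = qmap A Q p'" unfolding qmap_def by auto
qed

lemma rel_boundary_disj: "open S \<Longrightarrow> x \<in> rel_boundary U S \<Longrightarrow> x \<notin> S"
proof
  assume S: "open S" and x: "x \<in> rel_boundary U S" and xS: "x \<in> S"
  have "x \<in> U" using x closure_of_subset_topspace unfolding rel_boundary_def frontier_of_def by fastforce
  have "S \<inter> U \<subseteq> top_of_set U interior_of S"
    by (rule interior_of_maximal) (use openin_open_Int[OF S, of U] in \<open>auto simp: Int_commute\<close>)
  then show False using x xS \<open>x \<in> U\<close> unfolding rel_boundary_def frontier_of_def by auto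
qed


definition intp :: "(('a, 'e::euclidean_space) chart \<times> 'e set) \<times> 'e \<Rightarrow> bool" where
  "intp p \<longleftrightarrow> snd p \<in> cran (fst (fst p))"
definition ptof :: "(('a, 'e::euclidean_space) chart \<times> 'e set) \<times> 'e \<Rightarrow> 'a" where
  "ptof p = inv_into (cdom (fst (fst p))) (cmap (fst (fst p))) (snd p)"

lemma chart_inj:
  assumes "is_chart M \<alpha>" shows "inj_on (cmap \<alpha>) (cdom \<alpha>)"
proof -
  have "openin M (cdom \<alpha>)" and h: "homeomorphic_map (subtopology M (cdom \<alpha>)) (top_of_set (cran \<alpha>)) (cmap \<alpha>)"
    using assms unfolding is_chart_def by auto
  then have "topspace (subtopology M (cdom \<alpha>)) = cdom \<alpha>"
    by (simp add: openin_subset inf.absorb2)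
  then show ?thesis using homeomorphic_imp_injective_map[OF h] by simp
qed

lemma A_chart: assumes "maximal_smooth_atlas M A" "\<alpha> \<in> A" shows "is_chart M \<alpha>"
proof -
  have "\<forall>\<alpha>\<in>A. is_chart M \<alpha>" using assms(1) unfolding maximal_smooth_atlas_def by (rule conjunct1)
  then show ?thesis using assms(2) by (rule bspec)
qed

lemma SQ_A: assumes "Q \<subseteq> EXT M A" "e \<in> SQ A Q" shows "fst e \<in> A"
  using assms unfolding SQ_def EXT_def by auto

lemma ident_R:
  assumes atl: "maximal_smooth_atlas M A" and Q: "Q \<subseteq> EXT M A"
    and p: "p \<in> topspace (NQ A Q)" and p': "p' \<in> topspace (NQ A Q)" and i: "ident p p'"
  shows "(intp p \<longleftrightarrow> intp p') \<and> (intp p \<longrightarrow> ptof p = ptof p')"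
proof -
  obtain \<alpha> U x where pe: "p = ((\<alpha>, U), x)" by (metis prod.collapse)
  obtain \<beta> X y where pe': "p' = ((\<beta>, X), y)" by (metis prod.collapse)
  have "(\<alpha>, U) \<in> SQ A Q" "(\<beta>, X) \<in> SQ A Q" using p p' unfolding topspace_NQ pe pe' by auto
  then have "\<alpha> \<in> A" "\<beta> \<in> A" using SQ_A[OF Q] by fastforce+
  then have ca: "is_chart M \<alpha>" and cb: "is_chart M \<beta>" using A_chart[OF atl] by auto
  have oa: "open (cran \<alpha>)" and ob: "open (cran \<beta>)" using ca cb unfolding is_chart_def by auto
  have i': "(x \<in> cran \<alpha> \<and> y \<in> cran \<beta> \<and> (\<exists>z\<in>cdom \<alpha> \<inter> cdom \<beta>. cmap \<alpha> z = x \<and> cmap \<beta> z = y)) \<or>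
     (x \<in> rel_boundary U (cran \<alpha>) \<and> y \<in> rel_boundary X (cran \<beta>) \<and> bequiv \<alpha> {x} \<beta> {y})"
    using i unfolding ident_def pe pe' Let_def by simp
  from i' consider (a) z where "x \<in> cran \<alpha>" "y \<in> cran \<beta>" "z \<in> cdom \<alpha>" "z \<in> cdom \<beta>"
      "cmap \<alpha> z = x" "cmap \<beta> z = y"
    | (b) "x \<in> rel_boundary U (cran \<alpha>)" "y \<in> rel_boundary X (cran \<beta>)"
    by blast
  then show ?thesis
  proof cases
    case a
    have "ptof p = z" unfolding ptof_def pe using a(3,5) inv_into_f_f[OF chart_inj[OF ca] a(3)] by simp
    moreover have "ptof p' = z" unfolding ptof_def pe' using a(4,6) inv_into_f_f[OF chart_inj[OF cb] a(4)] by simp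
    ultimately show ?thesis using a unfolding intp_def pe pe' by simp
  next
    case b
    then show ?thesis using rel_boundary_disj[OF oa] rel_boundary_disj[OF ob]
      unfolding intp_def pe pe' by auto
  qed
qed

lemma qrel_R:
  assumes atl: "maximal_smooth_atlas M A" and Q: "Q \<subseteq> EXT M A"
    and h: "qrel A Q p p'"
  shows "(intp p \<longleftrightarrow> intp p') \<and> (intp p \<longrightarrow> ptof p = ptof p')"
  using h unfolding qrel_def
proof (induction rule: equivclp_induct)
  case base
  then show ?case by simp
next
  case (step y z)
  from step.hyps(2) have "(intp y \<longleftrightarrow> intp z) \<and> (intp y \<longrightarrow> ptof y = ptof z)"
  proof
    assume "y \<in> topspace (NQ A Q) \<and> z \<in> topspace (NQ A Q) \<and> ident y z"
    then show ?thesis using ident_R[OF atl Q, of y z] by simp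
  next
    assume "z \<in> topspace (NQ A Q) \<and> y \<in> topspace (NQ A Q) \<and> ident z y"
    then show ?thesis using ident_R[OF atl Q, of z y] by auto
  qed
  then show ?case using step.IH by auto
qed

lemma ident_qrel:
  assumes "p \<in> topspace (NQ A Q)" "p' \<in> topspace (NQ A Q)" "ident p p'"
  shows "qrel A Q p p'"
  unfolding qrel_def
  by (rule predicate2D[OF rtranlcp_le_equivclp], rule r_into_rtranclp) (use assms in auto)

lemma chart_pt_top:
  assumes "\<alpha> \<in> A" "x \<in> cdom \<alpha>"
  shows "((\<alpha>, cran \<alpha>), cmap \<alpha> x) \<in> topspace (NQ A Q)"
proof -
  have "(\<alpha>, cran \<alpha>) \<in> SQ A Q" unfolding SQ_def using assms(1) by blast
  moreover have "cmap \<alpha> x \<in> Npiece (\<alpha>, cran \<alpha>)" unfolding Npiece_def cran_def using assms(2) by simp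
  ultimately show ?thesis unfolding topspace_NQ by simp
qed

lemma ident_chart:
  assumes "x \<in> cdom \<alpha>" "x \<in> cdom \<beta>"
  shows "ident ((\<alpha>, U), cmap \<alpha> x) ((\<beta>, X), cmap \<beta> x)"
proof -
  have "cmap \<alpha> x \<in> cran \<alpha>" "cmap \<beta> x \<in> cran \<beta>" unfolding cran_def using assms by auto
  then show ?thesis unfolding ident_def Let_def fst_conv snd_conv using assms by blast
qed

lemma wd:
  assumes "\<alpha> \<in> A" "\<beta> \<in> A" "x \<in> cdom \<alpha>" "x \<in> cdom \<beta>"
  shows "qmap A Q ((\<alpha>, cran \<alpha>), cmap \<alpha> x) = qmap A Q ((\<beta>, cran \<beta>), cmap \<beta> x)"
  unfolding qmap_eq_iff
  by (rule ident_qrel[OF chart_pt_top chart_pt_top ident_chart]) (use assms in auto)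

lemma iota_eq:
  assumes "\<alpha> \<in> A" "x \<in> cdom \<alpha>"
  shows "iota A Q x = qmap A Q ((\<alpha>, cran \<alpha>), cmap \<alpha> x)"
proof -
  let ?b = "SOME \<alpha>. \<alpha> \<in> A \<and> x \<in> cdom \<alpha>"
  have "?b \<in> A \<and> x \<in> cdom ?b" by (rule someI[of _ \<alpha>]) (use assms in auto)
  then have "qmap A Q ((?b, cran ?b), cmap ?b x) = qmap A Q ((\<alpha>, cran \<alpha>), cmap \<alpha> x)"
    using assms by (intro wd) auto
  then show ?thesis unfolding iota_def Let_def by simp
qed

lemma int_qmap:
  assumes Q: "Q \<subseteq> EXT M A" and atl: "maximal_smooth_atlas M A"
    and p: "p \<in> topspace (NQ A Q)" and ip: "intp p"
  shows "ptof p \<in> cdom (fst (fst p)) \<and> qmap A Q p = iota A Q (ptof p)"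
proof -
  obtain \<alpha> U x where pe: "p = ((\<alpha>, U), x)" by (metis prod.collapse)
  have "(\<alpha>, U) \<in> SQ A Q" using p unfolding topspace_NQ pe by auto
  then have aA: "\<alpha> \<in> A" using SQ_A[OF Q] by fastforce
  have x: "x \<in> cran \<alpha>" using ip unfolding intp_def pe by simp
  have pd: "ptof p \<in> cdom \<alpha>" and cp: "cmap \<alpha> (ptof p) = x"
    using x unfolding ptof_def pe cran_def by (auto intro: inv_into_into f_inv_into_f)
  have "qmap A Q ((\<alpha>, U), cmap \<alpha> (ptof p)) = qmap A Q ((\<alpha>, cran \<alpha>), cmap \<alpha> (ptof p))"
    unfolding qmap_eq_iff
    by (rule ident_qrel[OF _ chart_pt_top ident_chart]) (use p aA pd cp pe in auto)
  then have "qmap A Q p = qmap A Q ((\<alpha>, cran \<alpha>), cmap \<alpha> (ptof p))" using cp pe by simp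
  then show ?thesis using iota_eq[OF aA pd] pd pe by simp
qed


lemma atl_cover: assumes "maximal_smooth_atlas M A" "x \<in> topspace M" obtains \<alpha> where "\<alpha> \<in> A" "x \<in> cdom \<alpha>"
proof -
  have "(\<Union>\<alpha>\<in>A. cdom \<alpha>) = topspace M" using assms(1) unfolding maximal_smooth_atlas_def by (elim conjE)
  then show ?thesis using assms(2) that by blast
qed

lemma cdom_sub: assumes "maximal_smooth_atlas M A" "\<alpha> \<in> A" shows "cdom \<alpha> \<subseteq> topspace M"
  using A_chart[OF assms] unfolding is_chart_def by (simp add: openin_subset)

lemma intp_chart: "x \<in> cdom \<alpha> \<Longrightarrow> intp ((\<alpha>, U), cmap \<alpha> x)"
  unfolding intp_def cran_def by simp

lemma ptof_chart: assumes "maximal_smooth_atlas M A" "\<alpha> \<in> A" "x \<in> cdom \<alpha>"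
  shows "ptof ((\<alpha>, U), cmap \<alpha> x) = x"
  unfolding ptof_def using inv_into_f_f[OF chart_inj[OF A_chart[OF assms(1,2)]] assms(3)] by simp

lemma iota_inj:
  assumes atl: "maximal_smooth_atlas M A" and Q: "Q \<subseteq> EXT M A"
  shows "inj_on (iota A Q) (topspace M)"
proof (rule inj_onI)
  fix x y assume x: "x \<in> topspace M" and y: "y \<in> topspace M" and e: "iota A Q x = iota A Q y"
  obtain \<alpha> where a: "\<alpha> \<in> A" "x \<in> cdom \<alpha>" using atl_cover[OF atl x] by blast
  obtain \<beta> where b: "\<beta> \<in> A" "y \<in> cdom \<beta>" using atl_cover[OF atl y] by blast
  have "qrel A Q ((\<alpha>, cran \<alpha>), cmap \<alpha> x) ((\<beta>, cran \<beta>), cmap \<beta> y)"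
    using e iota_eq[OF a] iota_eq[OF b] qmap_eq_iff by metis
  from qrel_R[OF atl Q this] show "x = y"
    using intp_chart[OF a(2)] ptof_chart[OF atl a] ptof_chart[OF atl b] by metis
qed

lemma preimg:
  assumes atl: "maximal_smooth_atlas M A" and Q: "Q \<subseteq> EXT M A" and W: "W \<subseteq> topspace M"
  shows "{p \<in> topspace (NQ A Q). qmap A Q p \<in> iota A Q ` W} = {p \<in> topspace (NQ A Q). intp p \<and> ptof p \<in> W}"
proof (intro set_eqI iffI)
  fix p assume "p \<in> {p \<in> topspace (NQ A Q). qmap A Q p \<in> iota A Q ` W}"
  then obtain w where p: "p \<in> topspace (NQ A Q)" and w: "w \<in> W" and e: "qmap A Q p = iota A Q w" by auto
  obtain \<alpha> where a: "\<alpha> \<in> A" "w \<in> cdom \<alpha>" using atl_cover[OF atl] w W by blast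
  have "qrel A Q ((\<alpha>, cran \<alpha>), cmap \<alpha> w) p"
    using e iota_eq[OF a] qmap_eq_iff by metis
  from qrel_R[OF atl Q this] have "intp p \<and> ptof p = w"
    using intp_chart[OF a(2)] ptof_chart[OF atl a] by metis
  then show "p \<in> {p \<in> topspace (NQ A Q). intp p \<and> ptof p \<in> W}" using p w by simp
next
  fix p assume "p \<in> {p \<in> topspace (NQ A Q). intp p \<and> ptof p \<in> W}"
  then have p: "p \<in> topspace (NQ A Q)" "intp p" "ptof p \<in> W" by auto
  then show "p \<in> {p \<in> topspace (NQ A Q). qmap A Q p \<in> iota A Q ` W}"
    using int_qmap[OF Q atl p(1,2)] by auto
qed

lemma iota_open:
  assumes atl: "maximal_smooth_atlas M A" and Q: "Q \<subseteq> EXT M A" and W: "openin M W"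
  shows "openin (QM A Q) (iota A Q ` W)"
proof -
  have Ws: "W \<subseteq> topspace M" using W by (rule openin_subset)
  have sub: "iota A Q ` W \<subseteq> qmap A Q ` topspace (NQ A Q)"
  proof
    fix y assume "y \<in> iota A Q ` W"
    then obtain w where w: "w \<in> W" "y = iota A Q w" by auto
    obtain \<alpha> where a: "\<alpha> \<in> A" "w \<in> cdom \<alpha>" using atl_cover[OF atl] w Ws by blast
    show "y \<in> qmap A Q ` topspace (NQ A Q)" using w iota_eq[OF a] chart_pt_top[OF a, of Q] by auto
  qed
  have "openin (NQ A Q) {p \<in> topspace (NQ A Q). intp p \<and> ptof p \<in> W}"
    unfolding NQ_def openin_sum_topology
  proof (intro conjI ballI)
    show "{p \<in> topspace (sum_topology (\<lambda>e. top_of_set (Npiece e)) (SQ A Q)). intp p \<and> ptof p \<in> W}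
        \<subseteq> Sigma (SQ A Q) (topspace \<circ> (\<lambda>e. top_of_set (Npiece e)))" by auto
  next
    fix e assume e: "e \<in> SQ A Q"
    obtain \<alpha> U where ee: "e = (\<alpha>, U)" by (metis prod.collapse)
    have aA: "\<alpha> \<in> A" using SQ_A[OF Q e] ee by simp
    have ch: "is_chart M \<alpha>" using A_chart[OF atl aA] .
    have inj: "inj_on (cmap \<alpha>) (cdom \<alpha>)" using chart_inj[OF ch] .
    have oc: "openin M (cdom \<alpha>)" and orn: "open (cran \<alpha>)"
      and h: "homeomorphic_map (subtopology M (cdom \<alpha>)) (top_of_set (cran \<alpha>)) (cmap \<alpha>)"
      using ch unfolding is_chart_def by auto
    have "openin (subtopology M (cdom \<alpha>)) (W \<inter> cdom \<alpha>)"
      using W oc by (simp add: openin_open_subtopology openin_Int)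
    then have "openin (top_of_set (cran \<alpha>)) (cmap \<alpha> ` (W \<inter> cdom \<alpha>))"
      using homeomorphic_imp_open_map[OF h] unfolding open_map_def by blast
    then have op: "open (cmap \<alpha> ` (W \<inter> cdom \<alpha>))" using orn openin_open_trans by blast
    have seq: "{x. (e, x) \<in> {p \<in> topspace (sum_topology (\<lambda>e. top_of_set (Npiece e)) (SQ A Q)). intp p \<and> ptof p \<in> W}}
          = Npiece e \<inter> cmap \<alpha> ` (W \<inter> cdom \<alpha>)"
    proof (intro set_eqI iffI)
      fix x assume "x \<in> {x. (e, x) \<in> {p \<in> topspace (sum_topology (\<lambda>e. top_of_set (Npiece e)) (SQ A Q)). intp p \<and> ptof p \<in> W}}"
      then have x: "x \<in> Npiece e" "x \<in> cran \<alpha>" "inv_into (cdom \<alpha>) (cmap \<alpha>) x \<in> W"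
        unfolding intp_def ptof_def ee by auto
      have "inv_into (cdom \<alpha>) (cmap \<alpha>) x \<in> cdom \<alpha>" "cmap \<alpha> (inv_into (cdom \<alpha>) (cmap \<alpha>) x) = x"
        using x(2) unfolding cran_def by (auto intro: inv_into_into f_inv_into_f)
      then show "x \<in> Npiece e \<inter> cmap \<alpha> ` (W \<inter> cdom \<alpha>)" using x by (metis IntI image_eqI)
    next
      fix x assume "x \<in> Npiece e \<inter> cmap \<alpha> ` (W \<inter> cdom \<alpha>)"
      then obtain w where x: "x \<in> Npiece e" "w \<in> W" "w \<in> cdom \<alpha>" "x = cmap \<alpha> w" by auto
      have "inv_into (cdom \<alpha>) (cmap \<alpha>) x = w" using inv_into_f_f[OF inj x(3)] x(4) by simp
      then show "x \<in> {x. (e, x) \<in> {p \<in> topspace (sum_topology (\<lambda>e. top_of_set (Npiece e)) (SQ A Q)). intp p \<and> ptof p \<in> W}}"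
        using x e unfolding intp_def ptof_def ee cran_def by auto
    qed
    show "openin (top_of_set (Npiece e)) {x. (e, x) \<in> {p \<in> topspace (sum_topology (\<lambda>e. top_of_set (Npiece e)) (SQ A Q)). intp p \<and> ptof p \<in> W}}"
      unfolding seq using op by (simp add: openin_open_Int)
  qed
  then show ?thesis unfolding openin_QM preimg[OF atl Q Ws] using sub by simp
qed


lemma iota_cont:
  assumes atl: "maximal_smooth_atlas M A" and Q: "Q \<subseteq> EXT M A"
  shows "continuous_map M (QM A Q) (iota A Q)"
  unfolding continuous_map_def
proof (intro conjI allI impI Pi_I)
  fix x assume x: "x \<in> topspace M"
  obtain \<alpha> where a: "\<alpha> \<in> A" "x \<in> cdom \<alpha>" using atl_cover[OF atl x] by blast
  show "iota A Q x \<in> topspace (QM A Q)"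
    unfolding topspace_QM using iota_eq[OF a] chart_pt_top[OF a, of Q] by auto
next
  fix T assume T: "openin (QM A Q) T"
  let ?P = "{p \<in> topspace (NQ A Q). qmap A Q p \<in> T}"
  have P: "openin (NQ A Q) ?P" using T unfolding openin_QM by simp
  show "openin M {x \<in> topspace M. iota A Q x \<in> T}"
  proof (subst openin_subopen, intro ballI)
    fix x assume "x \<in> {x \<in> topspace M. iota A Q x \<in> T}"
    then have x: "x \<in> topspace M" "iota A Q x \<in> T" by auto
    obtain \<alpha> where a: "\<alpha> \<in> A" "x \<in> cdom \<alpha>" using atl_cover[OF atl x(1)] by blast
    have ch: "is_chart M \<alpha>" using A_chart[OF atl a(1)] .
    have oc: "openin M (cdom \<alpha>)"
      and h: "homeomorphic_map (subtopology M (cdom \<alpha>)) (top_of_set (cran \<alpha>)) (cmap \<alpha>)"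
      using ch unfolding is_chart_def by auto
    have cm: "continuous_map (subtopology M (cdom \<alpha>)) euclidean (cmap \<alpha>)"
      using homeomorphic_imp_continuous_map[OF h] continuous_map_into_fulltopology by blast
    have e: "(\<alpha>, cran \<alpha>) \<in> SQ A Q" unfolding SQ_def using a(1) by blast
    have "openin (top_of_set (Npiece (\<alpha>, cran \<alpha>))) {y. ((\<alpha>, cran \<alpha>), y) \<in> ?P}"
      using P e unfolding NQ_def openin_sum_topology by blast
    then obtain G where G: "open G" "{y. ((\<alpha>, cran \<alpha>), y) \<in> ?P} = Npiece (\<alpha>, cran \<alpha>) \<inter> G"
      unfolding openin_open by blast
    let ?S = "{z \<in> topspace (subtopology M (cdom \<alpha>)). cmap \<alpha> z \<in> G}"
    have "openin (subtopology M (cdom \<alpha>)) ?S"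
      using openin_continuous_map_preimage[OF cm, of G] G(1) by (simp only: open_openin)
    then have So: "openin M ?S" using oc openin_open_subtopology by blast
    have Sd: "?S = {z \<in> cdom \<alpha>. cmap \<alpha> z \<in> G}" using openin_subset[OF oc] by auto
    have "x \<in> ?S"
    proof -
      have "((\<alpha>, cran \<alpha>), cmap \<alpha> x) \<in> ?P"
        using chart_pt_top[OF a, of Q] x(2) iota_eq[OF a] by simp
      then show ?thesis unfolding Sd using G(2) a(2) by blast
    qed
    moreover have "?S \<subseteq> {x \<in> topspace M. iota A Q x \<in> T}"
    proof
      fix z assume "z \<in> ?S"
      then have z: "z \<in> cdom \<alpha>" "cmap \<alpha> z \<in> G" unfolding Sd by auto
      have "cmap \<alpha> z \<in> Npiece (\<alpha>, cran \<alpha>)" unfolding Npiece_def cran_def using z by simp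
      then have "((\<alpha>, cran \<alpha>), cmap \<alpha> z) \<in> ?P" using G(2) z by blast
      then show "z \<in> {x \<in> topspace M. iota A Q x \<in> T}"
        using iota_eq[OF a(1) z(1)] cdom_sub[OF atl a(1)] z(1) by auto
    qed
    ultimately show "\<exists>S. openin M S \<and> x \<in> S \<and> S \<subseteq> {x \<in> topspace M. iota A Q x \<in> T}"
      using So by blast
  qed
qed

lemma iota_dense:
  assumes atl: "maximal_smooth_atlas M A" and Q: "Q \<subseteq> EXT M A"
  shows "QM A Q closure_of (iota A Q ` topspace M) = topspace (QM A Q)"
proof (rule subset_antisym)
  show "QM A Q closure_of (iota A Q ` topspace M) \<subseteq> topspace (QM A Q)" by (rule closure_of_subset_topspace)
next
  show "topspace (QM A Q) \<subseteq> QM A Q closure_of (iota A Q ` topspace M)"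
  proof
    fix c assume "c \<in> topspace (QM A Q)"
    then obtain p where p: "p \<in> topspace (NQ A Q)" and c: "c = qmap A Q p" unfolding topspace_QM by auto
    obtain \<alpha> U x where pe: "p = ((\<alpha>, U), x)" by (metis prod.collapse)
    have e: "(\<alpha>, U) \<in> SQ A Q" and xN: "x \<in> Npiece (\<alpha>, U)" using p unfolding pe topspace_NQ by auto
    have aA: "\<alpha> \<in> A" using SQ_A[OF Q e] by simp
    show "c \<in> QM A Q closure_of (iota A Q ` topspace M)"
      unfolding in_closure_of
    proof (intro conjI allI impI)
      show "c \<in> topspace (QM A Q)" unfolding topspace_QM c using p by simp
    next
      fix T assume T: "c \<in> T \<and> openin (QM A Q) T"
      let ?P = "{p \<in> topspace (NQ A Q). qmap A Q p \<in> T}"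
      have P: "openin (NQ A Q) ?P" using T unfolding openin_QM by simp
      have pP: "p \<in> ?P" using p T c by simp
      have "openin (top_of_set (Npiece (\<alpha>, U))) {y. ((\<alpha>, U), y) \<in> ?P}"
        using P e unfolding NQ_def openin_sum_topology by blast
      then obtain G where G: "open G" "{y. ((\<alpha>, U), y) \<in> ?P} = Npiece (\<alpha>, U) \<inter> G"
        unfolding openin_open by blast
      have xG: "x \<in> G" using pP G(2) pe by blast
      obtain a where a: "a \<in> cran \<alpha>" "a \<in> G"
      proof (cases "x \<in> cran \<alpha>")
        case True then show ?thesis using that xG by blast
      next
        case False
        then have xb: "x \<in> rel_boundary U (cran \<alpha>)" using xN unfolding Npiece_def by simp
        then have xc: "x \<in> top_of_set U closure_of (cran \<alpha>)"
          unfolding rel_boundary_def frontier_of_def by simp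
        have xU: "x \<in> U" using xc closure_of_subset_topspace by fastforce
        have "openin (top_of_set U) (U \<inter> G)" using G(1) by (rule openin_open_Int)
        then obtain a where "a \<in> cran \<alpha>" "a \<in> U \<inter> G"
          using xc xU xG unfolding in_closure_of by blast
        then show ?thesis using that by blast
      qed
      have aN: "a \<in> Npiece (\<alpha>, U)" unfolding Npiece_def using a(1) by simp
      then have "((\<alpha>, U), a) \<in> ?P" using G(2) a(2) by blast
      then have ap: "((\<alpha>, U), a) \<in> topspace (NQ A Q)" "qmap A Q ((\<alpha>, U), a) \<in> T" by auto
      have ip: "intp ((\<alpha>, U), a)" unfolding intp_def using a(1) by simp
      from int_qmap[OF Q atl ap(1) ip] have
        "ptof ((\<alpha>, U), a) \<in> cdom \<alpha>" "qmap A Q ((\<alpha>, U), a) = iota A Q (ptof ((\<alpha>, U), a))" by auto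
      then show "\<exists>y. y \<in> iota A Q ` topspace M \<and> y \<in> T"
        using ap(2) cdom_sub[OF atl aA] by blast
    qed
  qed
qed

theorem mainTheorem18:
  fixes M :: "'a topology"
    and A :: "('a, 'e::euclidean_space) chart set"
    and Q :: "(('a, 'e) chart \<times> 'e set) set"
  assumes "smooth_manifold M A"
    and "Q \<subseteq> EXT M A"
  shows "(\<forall>\<alpha>\<in>A. \<forall>\<beta>\<in>A. \<forall>x\<in>cdom \<alpha> \<inter> cdom \<beta>.
            qmap A Q ((\<alpha>, cran \<alpha>), cmap \<alpha> x) = qmap A Q ((\<beta>, cran \<beta>), cmap \<beta> x))
       \<and> (\<forall>\<alpha>\<in>A. \<forall>x\<in>cdom \<alpha>. iota A Q x = qmap A Q ((\<alpha>, cran \<alpha>), cmap \<alpha> x))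
       \<and> inj_on (iota A Q) (topspace M)
       \<and> continuous_map M (QM A Q) (iota A Q)
       \<and> embedding_map M (QM A Q) (iota A Q)
       \<and> openin (QM A Q) (iota A Q ` topspace M)
       \<and> QM A Q closure_of (iota A Q ` topspace M) = topspace (QM A Q)"
proof -
  have atl: "maximal_smooth_atlas M A" using assms(1) unfolding smooth_manifold_def by simp
  note Q = assms(2)
  have om: "open_map M (QM A Q) (iota A Q)" unfolding open_map_def using iota_open[OF atl Q] by blast
  show ?thesis
  proof (intro conjI ballI)
    fix \<alpha> \<beta> x assume "\<alpha> \<in> A" "\<beta> \<in> A" "x \<in> cdom \<alpha> \<inter> cdom \<beta>"
    then show "qmap A Q ((\<alpha>, cran \<alpha>), cmap \<alpha> x) = qmap A Q ((\<beta>, cran \<beta>), cmap \<beta> x)"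
      by (intro wd) auto
  next
    fix \<alpha> x assume "\<alpha> \<in> A" "x \<in> cdom \<alpha>"
    then show "iota A Q x = qmap A Q ((\<alpha>, cran \<alpha>), cmap \<alpha> x)" by (rule iota_eq)
  next
    show "inj_on (iota A Q) (topspace M)" by (rule iota_inj[OF atl Q])
    show "continuous_map M (QM A Q) (iota A Q)" by (rule iota_cont[OF atl Q])
    show "embedding_map M (QM A Q) (iota A Q)"
      by (rule injective_open_imp_embedding_map[OF iota_cont[OF atl Q] om iota_inj[OF atl Q]])
    show "openin (QM A Q) (iota A Q ` topspace M)" by (rule iota_open[OF atl Q openin_topspace])
    show "QM A Q closure_of (iota A Q ` topspace M) = topspace (QM A Q)" by (rule iota_dense[OF atl Q])
  qed
qed

end
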